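(* In the setting of the context, if $\lambda\in\varrho(T)\setminus\tilde\Lambda$ and $\Omega(\lambda)=0$, then $\mathbb M(\lambda)=\mathbb M(\bar\lambda)^*$.
   Context: Let $(a,b)$ be a real interval, $J$ a constant invertible skew-hermitian $n\times n$ matrix, $q,w$ $n\times n$ matrices of distributions of order $0$ (complex Radon measures) on $(a,b)$, $q$ hermitian, $w$ non-negative; $L^2(w)$ the space of classes of $f$ with $\int f^*wf<\infty$. For $u$ locally BV, $u^\pm$ are right/left limits; balanced means $u=(u^++u^-)/2$. $\Delta_r(x)=r(\{x\})$; $B_\pm(x,\lambda)=J\pm\frac12(\Delta_q(x)-\lambda\Delta_w(x))$; $\Lambda_x$ = set of $\lambda$ with $B_+(x,\lambda)$ or $B_-(x,\lambda)$ singular. Assume $a=x_0<x_1<\dots<x_N<x_{N+1}=b$ ($N\ge0$) with $\Lambda_x\cap\mathbb R=\emptyset$ for $x\notin\{x_1,\dots,x_N\}$; $\tilde\Lambda=\bigcup_{x\notin\{x_1,\dots,x_N\}}\Lambda_x$. Solutions of $Ju'+(q-\lambda w)u=wf$ are balanced locally BV functions satisfying it distributionally. $T_{\max}=\{([u],[f]):u,f\in L^2(w),Ju'+qu=wf\}$, $D_\lambda=\{(u,\lambda u)\in T_{\max}\}$, $n_\pm=\dim D_{\pm i}$, assumed equal; $(v_j,g_j)$, $j=1,\dots,n_+$, linearly independent in $D_i\oplus D_{-i}$ with $(g_k^*Jg_\ell)^-(b)-(g_k^*Jg_\ell)^+(a)=0$; $T=\{(u,f)\in T_{\max}:(g_j^*Ju)^-(b)-(g_j^*Ju)^+(a)=0\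 \forall j\}$ (self-adjoint), $\varrho(T)$ its resolvent set; $g=(g_1,\dots,g_{n_+})$. For $\lambda\notin\tilde\Lambda$, $U_j(\cdot,\lambda)$ is the balanced fundamental matrix of $Ju'+(q-\lambda w)u=0$ on $(x_j,x_{j+1})$ with $U_j(\xi_j,\lambda)=I$ ($\xi_j$ fixed, $q(\{\xi_j\})=w(\{\xi_j\})=0$), extended balanced and zero outside $[x_j,x_{j+1}]$; $\mathscr U=(U_0,\dots,U_N)$. $\mathcal J=\operatorname{diag}(J,\dots,J)$; $\mathcal B(\lambda)=\operatorname{diag}(B_+(x_k,\lambda))_{k=1}^N$, $\mathcal U^-(\lambda)=\operatorname{diag}(U_{k-1}^-(x_k,\lambda))_{k=1}^N$, $\mathcal U^+(\lambda)=\operatorname{diag}(U_k^+(x_k,\lambda))_{k=1}^N$, $E_\top=(0_{nN\times n},I_{nN})$, $E_\bot=(I_{nN},0_{nN\times n})$, $\mathbb B(\lambda)=\mathcal B(\lambda)\mathcal U^+(\lambda)E_\top+\mathcal B(\bar\lambda)^*\mathcal U^-(\lambda)E_\bot$, $\tilde{\mathbb B}(\lambda)=\mathcal B(\lambda)\mathcal U^+(\lambda)E_\top-\mathcal B(\bar\lambda)^*\mathcal U^-(\lambda)E_\bot$. $P_\pm(\lambda)$ orthogonal projections onto $\{\eta:\int_{(x_N,b)}(U_N\eta)^*wU_N\eta<\infty\}$ resp. $\{\eta:\int_{(a,x_1)}(U_0\eta)^*wU_0\eta<\infty\}$; $\mathscr Q_-=(I-P_-,0,\dots,0)$, $\mathscr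 Q_+=(0,\dots,0,I-P_+)$; $A_-(\lambda)=-(g^*JU_0(\cdot,\lambda)P_-(\lambda))^+(a)$, $A_+(\lambda)=(g^*JU_N(\cdot,\lambda)P_+(\lambda))^-(b)$, $\mathscr A_-=(A_-,0,\dots,0)$, $\mathscr A_+=(0,\dots,0,A_+)$. $\mathcal L_0$ = solutions of $Ju'+qu=0$ with $wu=0$; $N_0=\{\eta:\mathscr U(\cdot,0)\eta\in\mathcal L_0\}$; $\mathbb P$ = orthogonal projection onto $N_0^\perp$. $\mathbb F(\lambda)=(\mathbb B;\mathscr Q_-;\mathscr Q_+;\mathscr A_++\mathscr A_-;I-\mathbb P)$, $\mathbb H(\lambda)=\frac12(\tilde{\mathbb B};\mathscr Q_-;-\mathscr Q_+;\mathscr A_--\mathscr A_+;0)$ (block columns), $\mathbb F^\dagger$ the Moore–Penrose pseudoinverse (a left inverse of $\mathbb F(\lambda)$ for $\lambda\in\varrho(T)\setminus\tilde\Lambda$), $\mathbb M(\lambda)=\mathbb P\mathbb F(\lambda)^\dagger\mathbb H(\lambda)\mathcal J^{-1}\mathbb P$, $\Omega(\lambda)=\mathbb H(\lambda)\mathcal J^{-1}\mathbb P\mathbb F(\bar\lambda)^*+\mathbb F(\lambda)\mathbb P\mathcal J^{-1}\mathbb H(\bar\lambda)^*$. *)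

theory Defs
  imports "Jordan_Normal_Form.Schur_Decomposition" "HOL-Library.Extended_Real"
begin

definition hermitian_m :: "complex mat \<Rightarrow> bool" where
  "hermitian_m A \<longleftrightarrow> square_mat A \<and> mat_adjoint A = A"

definition skew_hermitian_m :: "complex mat \<Rightarrow> bool" where
  "skew_hermitian_m A \<longleftrightarrow> square_mat A \<and> mat_adjoint A = - A"

definition nonneg_m :: "complex mat \<Rightarrow> bool" where
  "nonneg_m A \<longleftrightarrow> hermitian_m A \<and>
     (\<forall>v. dim_vec v = dim_row A \<longrightarrow>
        Im (conjugate v \<bullet> (A *\<^sub>v v)) = 0 \<and> 0 \<le> Re (conjugate v \<bullet> (A *\<^sub>v v)))"

definition orth_proj :: "nat \<Rightarrow> complex mat \<Rightarrow> bool" where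
  "orth_proj m P \<longleftrightarrow> P \<in> carrier_mat m m \<and> P * P = P \<and> mat_adjoint P = P"

definition minv :: "complex mat \<Rightarrow> complex mat" where
  "minv A = (SOME B. B \<in> carrier_mat (dim_row A) (dim_row A) \<and>
              A * B = 1\<^sub>m (dim_row A) \<and> B * A = 1\<^sub>m (dim_row A))"

definition pinv :: "complex mat \<Rightarrow> complex mat" where
  "pinv A = (THE X. X \<in> carrier_mat (dim_col A) (dim_row A) \<and> A * X * A = A \<and> X * A * X = X
              \<and> mat_adjoint (A * X) = A * X \<and> mat_adjoint (X * A) = X * A)"

definition bdiag :: "nat \<Rightarrow> nat \<Rightarrow> (nat \<Rightarrow> complex mat) \<Rightarrow> complex mat" where
  "bdiag n K f = mat (n*K) (n*K)
     (\<lambda>(i,j). if i div n = j div n then f (i div n) $$ (i mod n, j mod n) else 0)"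

definition brow :: "nat \<Rightarrow> nat \<Rightarrow> nat \<Rightarrow> complex mat \<Rightarrow> complex mat" where
  "brow n N k X = mat (dim_row X) (n*(N+1))
     (\<lambda>(i,j). if j div n = k then X $$ (i, j mod n) else 0)"

fun vstack :: "nat \<Rightarrow> complex mat list \<Rightarrow> complex mat" where
  "vstack c [] = 0\<^sub>m 0 c"
| "vstack c (A # As) = four_block_mat A (0\<^sub>m (dim_row A) 0) (vstack c As) (0\<^sub>m (dim_row (vstack c As)) 0)"

(* E_top = (0_{nN x n}, I_{nN}),  E_bot = (I_{nN}, 0_{nN x n}) *)
definition Etop :: "nat \<Rightarrow> nat \<Rightarrow> complex mat" where
  "Etop n N = mat (n*N) (n*(N+1)) (\<lambda>(i,j). if j = i + n then 1 else 0)"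

definition Ebot :: "nat \<Rightarrow> nat \<Rightarrow> complex mat" where
  "Ebot n N = mat (n*N) (n*(N+1)) (\<lambda>(i,j). if j = i then 1 else 0)"

(* The atoms Delta_q(x) = q({x}), Delta_w(x) = w({x}) enter only through dq, dw *)
definition Bplus :: "complex mat \<Rightarrow> (real \<Rightarrow> complex mat) \<Rightarrow> (real \<Rightarrow> complex mat) \<Rightarrow> real \<Rightarrow> complex \<Rightarrow> complex mat" where
  "Bplus J dq dw x lam = J + (1/2) \<cdot>\<^sub>m (dq x - lam \<cdot>\<^sub>m dw x)"

definition Bminus :: "complex mat \<Rightarrow> (real \<Rightarrow> complex mat) \<Rightarrow> (real \<Rightarrow> complex mat) \<Rightarrow> real \<Rightarrow> complex \<Rightarrow> complex mat" where
  "Bminus J dq dw x lam = J - (1/2) \<cdot>\<^sub>m (dq x - lam \<cdot>\<^sub>m dw x)"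

definition LambdaX :: "complex mat \<Rightarrow> (real \<Rightarrow> complex mat) \<Rightarrow> (real \<Rightarrow> complex mat) \<Rightarrow> real \<Rightarrow> complex set" where
  "LambdaX J dq dw x = {lam. \<not> invertible_mat (Bplus J dq dw x lam) \<or> \<not> invertible_mat (Bminus J dq dw x lam)}"

definition tLambda :: "complex mat \<Rightarrow> (real \<Rightarrow> complex mat) \<Rightarrow> (real \<Rightarrow> complex mat) \<Rightarrow> ereal \<Rightarrow> ereal \<Rightarrow> nat \<Rightarrow> (nat \<Rightarrow> real) \<Rightarrow> complex set" where
  "tLambda J dq dw a b N xs = (\<Union>x\<in>{x. a < ereal x \<and> ereal x < b \<and> x \<notin> xs ` {1..N}}. LambdaX J dq dw x)"

definition calB where
  "calB n N J dq dw xs lam = bdiag n N (\<lambda>k. Bplus J dq dw (xs (k+1)) lam)"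

(* Um k lam = U_{k-1}^-(x_k,lam),  Up k lam = U_k^+(x_k,lam), k = 1..N *)
definition bbB where
  "bbB n N J dq dw xs Um Up lam =
     calB n N J dq dw xs lam * bdiag n N (\<lambda>k. Up (k+1) lam) * Etop n N
     + mat_adjoint (calB n N J dq dw xs (cnj lam)) * bdiag n N (\<lambda>k. Um (k+1) lam) * Ebot n N"

definition tbbB where
  "tbbB n N J dq dw xs Um Up lam =
     calB n N J dq dw xs lam * bdiag n N (\<lambda>k. Up (k+1) lam) * Etop n N
     - mat_adjoint (calB n N J dq dw xs (cnj lam)) * bdiag n N (\<lambda>k. Um (k+1) lam) * Ebot n N"

definition FF where
  "FF n N J dq dw xs Um Up Pm Pp Am Ap PP lam = vstack (n*(N+1))
     [ bbB n N J dq dw xs Um Up lam,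
       brow n N 0 (1\<^sub>m n - Pm lam),
       brow n N N (1\<^sub>m n - Pp lam),
       brow n N N (Ap lam) + brow n N 0 (Am lam),
       1\<^sub>m (n*(N+1)) - PP ]"

definition HH where
  "HH n N J dq dw xs Um Up Pm Pp Am Ap lam = (1/2) \<cdot>\<^sub>m vstack (n*(N+1))
     [ tbbB n N J dq dw xs Um Up lam,
       brow n N 0 (1\<^sub>m n - Pm lam),
       - brow n N N (1\<^sub>m n - Pp lam),
       brow n N 0 (Am lam) - brow n N N (Ap lam),
       0\<^sub>m (n*(N+1)) (n*(N+1)) ]"

definition calJinv where
  "calJinv n N J = bdiag n (N+1) (\<lambda>_. minv J)"

definition MM where
  "MM n N J dq dw xs Um Up Pm Pp Am Ap PP lam =
     PP * pinv (FF n N J dq dw xs Um Up Pm Pp Am Ap PP lam) * HH n N J dq dw xs Um Up Pm Pp Am Ap lam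
        * calJinv n N J * PP"

definition Omega where
  "Omega n N J dq dw xs Um Up Pm Pp Am Ap PP lam =
     HH n N J dq dw xs Um Up Pm Pp Am Ap lam * calJinv n N J * PP
        * mat_adjoint (FF n N J dq dw xs Um Up Pm Pp Am Ap PP (cnj lam))
   + FF n N J dq dw xs Um Up Pm Pp Am Ap PP lam * PP * calJinv n N J
        * mat_adjoint (HH n N J dq dw xs Um Up Pm Pp Am Ap (cnj lam))"

end

theory Submission
  imports Defs
begin


lemma adj_dims[simp]: "dim_row (mat_adjoint A) = dim_col A" "dim_col (mat_adjoint A) = dim_row A"
  by (simp_all add: mat_adjoint_def mat_of_rows_def)

lemma adj_carrier: "A \<in> carrier_mat a b \<Longrightarrow> mat_adjoint A \<in> carrier_mat b a"
  unfolding carrier_mat_def by simp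

lemma adj_index[simp]: "i < dim_col A \<Longrightarrow> j < dim_row A \<Longrightarrow> mat_adjoint A $$ (i,j) = cnj (A $$ (j,i))"
  by (simp add: mat_adjoint_def mat_of_rows_def)

lemma adj_adj[simp]: "mat_adjoint (mat_adjoint A) = (A :: complex mat)"
  by (rule eq_matI, auto)

lemma adj_mult: assumes "A \<in> carrier_mat a b" "B \<in> carrier_mat b c"
  shows "mat_adjoint (A * B :: complex mat) = mat_adjoint B * mat_adjoint A"
proof (rule eq_matI)
  fix i j assume ij: "i < dim_row (mat_adjoint B * mat_adjoint A)" "j < dim_col (mat_adjoint B * mat_adjoint A)"
  show "mat_adjoint (A * B) $$ (i, j) = (mat_adjoint B * mat_adjoint A) $$ (i, j)"
  proof -
    have i: "i < c" and j: "j < a" using ij assms by auto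
    have "mat_adjoint (A * B) $$ (i, j) = cnj (\<Sum>k<b. A $$ (j,k) * B $$ (k,i))"
      using assms i j by (simp add: scalar_prod_def row_def col_def atLeast0LessThan)
    also have "\<dots> = (\<Sum>k<b. cnj (B $$ (k,i)) * cnj (A $$ (j,k)))"
      by (simp add: cnj_sum mult.commute)
    also have "\<dots> = (mat_adjoint B * mat_adjoint A) $$ (i, j)"
      using assms i j by (simp add: scalar_prod_def row_def col_def atLeast0LessThan)
    finally show ?thesis .
  qed
qed simp_all

lemma adj_add: assumes "A \<in> carrier_mat a b" "B \<in> carrier_mat a b"
  shows "mat_adjoint (A + B :: complex mat) = mat_adjoint A + mat_adjoint B"
  by (rule eq_matI, use assms in auto)

lemma adj_minus: assumes "A \<in> carrier_mat a b" "B \<in> carrier_mat a b"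
  shows "mat_adjoint (A - B :: complex mat) = mat_adjoint A - mat_adjoint B"
  by (rule eq_matI, use assms in auto)

lemma adj_uminus: "mat_adjoint (- A :: complex mat) = - mat_adjoint A"
  by (rule eq_matI, auto)

lemma adj_smult: "mat_adjoint (c \<cdot>\<^sub>m A :: complex mat) = cnj c \<cdot>\<^sub>m mat_adjoint A"
  by (rule eq_matI, auto)

lemma adj_one[simp]: "mat_adjoint (1\<^sub>m k :: complex mat) = 1\<^sub>m k"
  by (rule eq_matI, auto)

lemma trunc_mult: assumes "dim_row F = R"
  shows "mat (dim_row X) R (\<lambda>(i,j). row X i $ j) * F = X * F"
  by (rule eq_matI, use assms in \<open>auto simp: scalar_prod_def intro!: sum.cong\<close>)

lemma adj_sprod: fixes F :: "complex mat" assumes "F \<in> carrier_mat R d" "u \<in> carrier_vec d" "w \<in> carrier_vec R"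
  shows "conjugate u \<bullet> (mat_adjoint F *\<^sub>v w) = w \<bullet> conjugate (F *\<^sub>v u)"
proof -
  have "conjugate u \<bullet> (mat_adjoint F *\<^sub>v w) = (\<Sum>i<d. cnj (u $ i) * (\<Sum>j<R. cnj (F $$ (j,i)) * w $ j))"
    using assms by (simp add: scalar_prod_def row_def atLeast0LessThan)
  also have "\<dots> = (\<Sum>j<R. w $ j * (\<Sum>i<d. cnj (F $$ (j,i)) * cnj (u $ i)))"
    by (simp add: sum_distrib_left sum.swap[of _ "{..<d}"] mult.commute mult.left_commute)
  also have "\<dots> = w \<bullet> conjugate (F *\<^sub>v u)"
    using assms by (simp add: scalar_prod_def row_def atLeast0LessThan cnj_sum)
  finally show ?thesis .
qed

lemma pinv_left: assumes F: "F \<in> carrier_mat R d" and L: "L \<in> carrier_mat d R" and LF: "L * F = 1\<^sub>m d"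
  shows "pinv F \<in> carrier_mat d R \<and> pinv F * F = 1\<^sub>m d"
proof -
  have aF: "mat_adjoint F \<in> carrier_mat d R" using F by (rule adj_carrier)
  define G where "G = mat_adjoint F * F"
  have G: "G \<in> carrier_mat d d" unfolding G_def by (rule mult_carrier_mat[OF aF F])
  have inj: "v = 0\<^sub>v d" if v: "v \<in> carrier_vec d" and Fv: "F *\<^sub>v v = 0\<^sub>v R" for v
  proof -
    have "v = (L * F) *\<^sub>v v" using LF v by simp
    also have "\<dots> = L *\<^sub>v (F *\<^sub>v v)" using L F v by simp
    also have "\<dots> = 0\<^sub>v d" using Fv L by (intro eq_vecI, auto simp: scalar_prod_def)
    finally show ?thesis .
  qed
  have "det G \<noteq> 0"
  proof
    assume "det G = 0"
    then obtain v where v: "v \<in> carrier_vec d" "v \<noteq> 0\<^sub>v d" "G *\<^sub>v v = 0\<^sub>v d"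
      using det_0_iff_vec_prod_zero_field[OF G] by auto
    have "G *\<^sub>v v = mat_adjoint F *\<^sub>v (F *\<^sub>v v)" unfolding G_def using F v by (intro assoc_mult_mat_vec[of _ d R _ d], auto)
    hence e: "mat_adjoint F *\<^sub>v (F *\<^sub>v v) = 0\<^sub>v d" using v by simp
    have "0 = conjugate v \<bullet> (mat_adjoint F *\<^sub>v (F *\<^sub>v v))" unfolding e by (simp add: scalar_prod_def)
    also have "\<dots> = (F *\<^sub>v v) \<bullet>c (F *\<^sub>v v)" using adj_sprod[OF F v(1)] F v by simp
    finally have "F *\<^sub>v v = 0\<^sub>v R"
      using conjugate_square_eq_0_vec[of "F *\<^sub>v v" R] F v by simp
    with inj v show False by auto
  qed
  from det_non_zero_imp_unit[OF G this, of undefined]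
  obtain Gi where Gi: "Gi \<in> carrier_mat d d" "Gi * G = 1\<^sub>m d" "G * Gi = 1\<^sub>m d"
    unfolding Units_def ring_mat_def by auto
  have adjG: "mat_adjoint G = G" unfolding G_def using F by (simp add: adj_mult[OF adj_carrier[OF F] F])
  have "mat_adjoint Gi * G = 1\<^sub>m d"
    using adj_mult[OF G Gi(1)] Gi adjG by simp
  hence adjGi: "mat_adjoint Gi = Gi"
    by (metis G Gi adj_carrier assoc_mult_mat left_mult_one_mat right_mult_one_mat)
  define X0 where "X0 = Gi * mat_adjoint F"
  have X0: "X0 \<in> carrier_mat d R" unfolding X0_def by (rule mult_carrier_mat[OF Gi(1) aF])
  have X0F: "X0 * F = 1\<^sub>m d" unfolding X0_def using Gi F G_def by (simp add: assoc_mult_mat[OF Gi(1) adj_carrier[OF F] F])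
  have P0: "X0 \<in> carrier_mat (dim_col F) (dim_row F) \<and> F * X0 * F = F \<and> X0 * F * X0 = X0
      \<and> mat_adjoint (F * X0) = F * X0 \<and> mat_adjoint (X0 * F) = X0 * F"
  proof (intro conjI)
    show "X0 \<in> carrier_mat (dim_col F) (dim_row F)" using X0 F by auto
    show "F * X0 * F = F" using X0F F X0 by simp
    show "X0 * F * X0 = X0" using X0F F X0 by simp
    show "mat_adjoint (X0 * F) = X0 * F" using X0F by simp
    show "mat_adjoint (F * X0) = F * X0"
    proof -
      have "mat_adjoint (F * X0) = mat_adjoint X0 * mat_adjoint F" by (rule adj_mult[OF F X0])
      also have "mat_adjoint X0 = F * Gi" unfolding X0_def adj_mult[OF Gi(1) aF] adjGi by simp
      also have "F * Gi * mat_adjoint F = F * X0" unfolding X0_def by (rule assoc_mult_mat[OF F Gi(1) aF])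
      finally show ?thesis .
    qed
  qed
  have uniq: "Y = X0" if "Y \<in> carrier_mat (dim_col F) (dim_row F) \<and> F * Y * F = F \<and> Y * F * Y = Y
      \<and> mat_adjoint (F * Y) = F * Y \<and> mat_adjoint (Y * F) = Y * F" for Y
  proof -
    have Y: "Y \<in> carrier_mat d R" and FYF: "F * Y * F = F" and h: "mat_adjoint (F * Y) = F * Y"
      using that F by auto
    have "mat_adjoint F = mat_adjoint (F * Y * F)" using FYF by simp
    also have "\<dots> = mat_adjoint F * mat_adjoint (F * Y)"
      by (rule adj_mult[OF mult_carrier_mat[OF F Y] F])
    also have "\<dots> = G * Y" unfolding G_def h using F Y aF by simp
    finally have "X0 = Gi * (G * Y)" unfolding X0_def by simp
    also have "\<dots> = Y" using Gi G Y by (simp flip: assoc_mult_mat)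
    finally show ?thesis by simp
  qed
  have "pinv F = X0" unfolding pinv_def
    by (rule the_equality, rule P0, rule uniq)
  thus ?thesis using X0 X0F by simp
qed





lemma vstack_dims[simp]: "dim_row (vstack c (A # As)) = dim_row A + dim_row (vstack c As)"
   "dim_col (vstack c (A # As)) = dim_col A"
  by (simp_all add: four_block_mat_def Let_def)

lemma vstack_nil_dim[simp]: "dim_row (vstack c []) = 0" by simp

lemma FF_carrier:
  assumes U: "\<And>k \<mu>. Um k \<mu> \<in> carrier_mat n n" "\<And>k \<mu>. Up k \<mu> \<in> carrier_mat n n"
    and P: "\<And>\<mu>. Pm \<mu> \<in> carrier_mat n n" "\<And>\<mu>. Pp \<mu> \<in> carrier_mat n n"
    and A: "\<And>\<mu>. Am \<mu> \<in> carrier_mat np n" "\<And>\<mu>. Ap \<mu> \<in> carrier_mat np n"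
    and PP: "PP \<in> carrier_mat (n*(N+1)) (n*(N+1))"
  shows "FF n N J dq dw xs Um Up Pm Pp Am Ap PP lam \<in> carrier_mat (n*N + n + n + np + n*(N+1)) (n*(N+1))"
    "HH n N J dq dw xs Um Up Pm Pp Am Ap lam \<in> carrier_mat (n*N + n + n + np + n*(N+1)) (n*(N+1))"
  unfolding carrier_mat_def
  by (simp_all add: carrier_matD[OF P(1)] carrier_matD[OF P(2)] carrier_matD[OF A(1)] carrier_matD[OF A(2)]
      carrier_matD[OF PP] FF_def HH_def bbB_def tbbB_def calB_def bdiag_def brow_def Etop_def Ebot_def del: vstack.simps)

lemma minv_props: assumes J: "J \<in> carrier_mat n n" "invertible_mat J"
  shows "minv J \<in> carrier_mat n n \<and> J * minv J = 1\<^sub>m n \<and> minv J * J = 1\<^sub>m n"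
proof -
  obtain B where B: "inverts_mat J B" "inverts_mat B J" using J(2) unfolding invertible_mat_def by auto
  have JB: "J * B = 1\<^sub>m n" using B(1) J(1) unfolding inverts_mat_def by simp
  have "dim_row B = n"
    using B(2) J(1) unfolding inverts_mat_def by (metis carrier_matD(2) index_mult_mat(3) index_one_mat(3))
  moreover have "dim_col B = n" using arg_cong[OF JB, of dim_col] by simp
  ultimately have Bc: "B \<in> carrier_mat n n" by auto
  have BJ: "B * J = 1\<^sub>m n" using B(2) Bc unfolding inverts_mat_def by simp
  have "\<exists>B. B \<in> carrier_mat (dim_row J) (dim_row J) \<and> J * B = 1\<^sub>m (dim_row J) \<and> B * J = 1\<^sub>m (dim_row J)"
    using Bc JB BJ J(1) by auto
  from someI_ex[OF this] show ?thesis using J(1) unfolding minv_def by simp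
qed

lemma adj_minv: assumes J: "J \<in> carrier_mat n n" "invertible_mat J" and sk: "mat_adjoint J = - J"
  shows "mat_adjoint (minv J) = - minv J"
proof -
  note M = minv_props[OF J]
  define N where "N = minv J"
  have Nc: "N \<in> carrier_mat n n" and JN: "J * N = 1\<^sub>m n" using M unfolding N_def by auto
  have aN: "mat_adjoint N \<in> carrier_mat n n" using Nc by (rule adj_carrier)
  have "mat_adjoint N * mat_adjoint J = 1\<^sub>m n" using adj_mult[OF J(1) Nc] JN by simp
  hence NJ: "mat_adjoint N * J = - 1\<^sub>m n" unfolding sk using aN J(1)
    by (metis uminus_mult_right_mat carrier_matD uminus_uminus_mat)
  have "mat_adjoint N = mat_adjoint N * (J * N)" using JN by (simp add: right_mult_one_mat[OF aN])
  also have "\<dots> = (mat_adjoint N * J) * N" using aN J(1) Nc by simp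
  also have "\<dots> = - N" unfolding NJ using Nc by simp
  finally show ?thesis unfolding N_def .
qed

lemma adj_calJinv: assumes J: "J \<in> carrier_mat n n" "invertible_mat J" and sk: "mat_adjoint J = - J"
  shows "mat_adjoint (calJinv n N J) = - calJinv n N J"
proof -
  note M = minv_props[OF J]
  have e: "cnj (minv J $$ (b, a)) = - minv J $$ (a, b)" if "a < n" "b < n" for a b
  proof -
    have "mat_adjoint (minv J) $$ (a, b) = (- minv J) $$ (a, b)" using adj_minv[OF J sk] by simp
    thus ?thesis using that M by auto
  qed
  show ?thesis
  proof (rule eq_matI)
    fix i j assume ij: "i < dim_row (- calJinv n N J)" "j < dim_col (- calJinv n N J)"
    hence i: "i < n * (N+1)" and j: "j < n * (N+1)" by (auto simp: calJinv_def bdiag_def)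
    hence n: "n > 0" by (cases n) auto
    have im: "i mod n < n" "j mod n < n" using n by auto
    show "mat_adjoint (calJinv n N J) $$ (i, j) = (- calJinv n N J) $$ (i, j)"
      using i j e[OF im] by (auto simp: calJinv_def bdiag_def)
  qed (auto simp: calJinv_def bdiag_def)
qed

lemma inv_neg_adj: fixes A :: "complex mat" assumes A: "A \<in> carrier_mat n n" "invertible_mat A"
  shows "invertible_mat (- mat_adjoint A)"
proof -
  note M = minv_props[OF A]
  have Nc: "minv A \<in> carrier_mat n n" using M by auto
  have aA: "mat_adjoint A \<in> carrier_mat n n" using A(1) by (rule adj_carrier)
  have aN: "mat_adjoint (minv A) \<in> carrier_mat n n" using Nc by (rule adj_carrier)
  have e1: "(- mat_adjoint A) * (- mat_adjoint (minv A)) = 1\<^sub>m n"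
    using adj_mult[OF Nc A(1)] M by (simp add: carrier_matD[OF A(1)] carrier_matD[OF Nc])
  have e2: "(- mat_adjoint (minv A)) * (- mat_adjoint A) = 1\<^sub>m n"
    using adj_mult[OF A(1) Nc] M by (simp add: carrier_matD[OF A(1)] carrier_matD[OF Nc])
  show ?thesis unfolding invertible_mat_def inverts_mat_def
    apply (intro conjI exI[of _ "- mat_adjoint (minv A)"])
    using e1 e2 by (simp_all add: carrier_matD[OF A(1)] carrier_matD[OF Nc])
qed

lemma herm_entry: assumes "mat_adjoint M = (M :: complex mat)" "M \<in> carrier_mat n n" "i < n" "j < n"
  shows "cnj (M $$ (j, i)) = M $$ (i, j)"
proof -
  have "mat_adjoint M $$ (i,j) = M $$ (i,j)" using assms(1) by simp
  moreover have "mat_adjoint M $$ (i,j) = cnj (M $$ (j,i))" using assms(2-4) by simp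
  ultimately show ?thesis by simp
qed

lemma skew_entry: assumes "mat_adjoint M = - (M :: complex mat)" "M \<in> carrier_mat n n" "i < n" "j < n"
  shows "cnj (M $$ (j, i)) = - M $$ (i, j)"
proof -
  have "mat_adjoint M $$ (i,j) = (- M) $$ (i,j)" using assms(1) by simp
  moreover have "mat_adjoint M $$ (i,j) = cnj (M $$ (j,i))" using assms(2-4) by simp
  ultimately show ?thesis using assms(2-4) by simp
qed

lemma adj_B:
  assumes J: "J \<in> carrier_mat n n" "mat_adjoint J = - J"
    and q: "dq x \<in> carrier_mat n n" "mat_adjoint (dq x) = dq x"
    and w: "dw x \<in> carrier_mat n n" "mat_adjoint (dw x) = dw x"
  shows "mat_adjoint (Bplus J dq dw x \<mu>) = - Bminus J dq dw x (cnj \<mu>)"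
    "mat_adjoint (Bminus J dq dw x \<mu>) = - Bplus J dq dw x (cnj \<mu>)"
proof -
  note dims = carrier_matD[OF J(1)] carrier_matD[OF q(1)] carrier_matD[OF w(1)]
  show "mat_adjoint (Bplus J dq dw x \<mu>) = - Bminus J dq dw x (cnj \<mu>)"
  proof (rule eq_matI)
    fix i j assume "i < dim_row (- Bminus J dq dw x (cnj \<mu>))" "j < dim_col (- Bminus J dq dw x (cnj \<mu>))"
    hence ij: "i < n" "j < n" by (simp_all add: Bminus_def dims)
    show "mat_adjoint (Bplus J dq dw x \<mu>) $$ (i, j) = (- Bminus J dq dw x (cnj \<mu>)) $$ (i, j)"
      using ij skew_entry[OF J(2,1) ij] herm_entry[OF q(2,1) ij] herm_entry[OF w(2,1) ij]
      by (simp add: Bplus_def Bminus_def dims algebra_simps)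
  qed (simp_all add: Bplus_def Bminus_def dims)
  show "mat_adjoint (Bminus J dq dw x \<mu>) = - Bplus J dq dw x (cnj \<mu>)"
  proof (rule eq_matI)
    fix i j assume "i < dim_row (- Bplus J dq dw x (cnj \<mu>))" "j < dim_col (- Bplus J dq dw x (cnj \<mu>))"
    hence ij: "i < n" "j < n" by (simp_all add: Bplus_def dims)
    show "mat_adjoint (Bminus J dq dw x \<mu>) $$ (i, j) = (- Bplus J dq dw x (cnj \<mu>)) $$ (i, j)"
      using ij skew_entry[OF J(2,1) ij] herm_entry[OF q(2,1) ij] herm_entry[OF w(2,1) ij]
      by (simp add: Bplus_def Bminus_def dims algebra_simps)
  qed (simp_all add: Bplus_def Bminus_def dims)
qed

lemma B_carrier:
  assumes J: "J \<in> carrier_mat n n" and q: "dq x \<in> carrier_mat n n" and w: "dw x \<in> carrier_mat n n"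
  shows "Bplus J dq dw x \<mu> \<in> carrier_mat n n" "Bminus J dq dw x \<mu> \<in> carrier_mat n n"
  unfolding carrier_mat_def Bplus_def Bminus_def
  by (simp_all add: carrier_matD[OF J] carrier_matD[OF q] carrier_matD[OF w])

lemma LambdaX_conj:
  assumes J: "J \<in> carrier_mat n n" "mat_adjoint J = - J"
    and q: "dq x \<in> carrier_mat n n" "mat_adjoint (dq x) = dq x"
    and w: "dw x \<in> carrier_mat n n" "mat_adjoint (dw x) = dw x"
    and mu: "\<mu> \<in> LambdaX J dq dw x"
  shows "cnj \<mu> \<in> LambdaX J dq dw x"
proof (rule ccontr)
  assume "cnj \<mu> \<notin> LambdaX J dq dw x"
  hence i1: "invertible_mat (Bplus J dq dw x (cnj \<mu>))" and i2: "invertible_mat (Bminus J dq dw x (cnj \<mu>))"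
    unfolding LambdaX_def by auto
  have "Bplus J dq dw x \<mu> = - mat_adjoint (Bminus J dq dw x (cnj \<mu>))"
    using adj_B(2)[where dq=dq and dw=dw and x=x and \<mu>="cnj \<mu>", OF J q w] by simp
  hence p: "invertible_mat (Bplus J dq dw x \<mu>)"
    using inv_neg_adj[OF B_carrier(2)[where dq=dq and dw=dw and x=x, OF J(1) q(1) w(1)] i2] by simp
  have "Bminus J dq dw x \<mu> = - mat_adjoint (Bplus J dq dw x (cnj \<mu>))"
    using adj_B(1)[where dq=dq and dw=dw and x=x and \<mu>="cnj \<mu>", OF J q w] by simp
  hence m: "invertible_mat (Bminus J dq dw x \<mu>)"
    using inv_neg_adj[OF B_carrier(1)[where dq=dq and dw=dw and x=x, OF J(1) q(1) w(1)] i1] by simp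
  from mu p m show False unfolding LambdaX_def by auto
qed


lemma assoc': "dim_col A = dim_row B \<Longrightarrow> dim_col B = dim_row C \<Longrightarrow> A * B * C = A * (B * C)"
  by (rule assoc_mult_mat[of A "dim_row A" "dim_col A" B "dim_col B" C "dim_col C"]) auto

lemma main_alg:
  fixes F F' H H' K P X X' :: "complex mat"
  assumes F: "F \<in> carrier_mat R d" and F': "F' \<in> carrier_mat R d"
    and H: "H \<in> carrier_mat R d" and H': "H' \<in> carrier_mat R d"
    and K: "K \<in> carrier_mat d d" and P: "P \<in> carrier_mat d d"
    and X: "X \<in> carrier_mat d R" and X': "X' \<in> carrier_mat d R"
    and XF: "X * F = 1\<^sub>m d" and XF': "X' * F' = 1\<^sub>m d"
    and aK: "mat_adjoint K = - K" and aP: "mat_adjoint P = P" and PP: "P * P = P"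
    and Om: "H * K * P * mat_adjoint F' + F * P * K * mat_adjoint H' = 0\<^sub>m R R"
  shows "P * X * H * K * P = mat_adjoint (P * X' * H' * K * P)"
proof -
  have aF': "mat_adjoint F' \<in> carrier_mat d R" using F' by (rule adj_carrier)
  have aH': "mat_adjoint H' \<in> carrier_mat d R" using H' by (rule adj_carrier)
  have aX': "mat_adjoint X' \<in> carrier_mat R d" using X' by (rule adj_carrier)
  note dims = carrier_matD[OF F] carrier_matD[OF F'] carrier_matD[OF H] carrier_matD[OF H']
    carrier_matD[OF K] carrier_matD[OF P] carrier_matD[OF X] carrier_matD[OF X']
    carrier_matD[OF aF'] carrier_matD[OF aH'] carrier_matD[OF aX']
  have PPZ: "P * (P * Z) = P * Z" if "dim_row Z = d" for Z
    using that by (simp add: dims PP assoc'[symmetric] del: assoc_mult_mat)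
  define A where "A = X * H * K * P"
  define B where "B = P * K * mat_adjoint H' * mat_adjoint X'"
  have A: "A \<in> carrier_mat d d" unfolding A_def
    by (rule mult_carrier_mat[OF mult_carrier_mat[OF mult_carrier_mat[OF X H] K] P])
  have B: "B \<in> carrier_mat d d" unfolding B_def
    by (rule mult_carrier_mat[OF mult_carrier_mat[OF mult_carrier_mat[OF P K] aH'] aX'])
  have FX: "mat_adjoint F' * mat_adjoint X' = 1\<^sub>m d"
    using adj_mult[OF X' F'] XF' by simp
  have S: "H * K * P * mat_adjoint F' \<in> carrier_mat R R"
    by (rule mult_carrier_mat[OF mult_carrier_mat[OF mult_carrier_mat[OF H K] P] aF'])
  have T: "F * P * K * mat_adjoint H' \<in> carrier_mat R R"
    by (rule mult_carrier_mat[OF mult_carrier_mat[OF mult_carrier_mat[OF F P] K] aH'])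
  have "0\<^sub>m d d = X * (H * K * P * mat_adjoint F' + F * P * K * mat_adjoint H') * mat_adjoint X'"
    unfolding Om using X aX' by (simp add: left_mult_zero_mat[OF aX'])
  also have "\<dots> = X * (H * K * P * mat_adjoint F') * mat_adjoint X' + X * (F * P * K * mat_adjoint H') * mat_adjoint X'"
    using mult_add_distrib_mat[OF X S T] add_mult_distrib_mat[OF mult_carrier_mat[OF X S] mult_carrier_mat[OF X T] aX'] by simp
  also have "X * (H * K * P * mat_adjoint F') * mat_adjoint X' = A * (mat_adjoint F' * mat_adjoint X')"
    unfolding A_def by (simp add: dims assoc' del: assoc_mult_mat)
  also have "\<dots> = A" unfolding FX using A by simp
  also have "X * (F * P * K * mat_adjoint H') * mat_adjoint X' = (X * F) * B"
    unfolding B_def by (simp add: dims assoc' del: assoc_mult_mat)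
  also have "\<dots> = B" unfolding XF using B by simp
  finally have AB: "A + B = 0\<^sub>m d d" by simp
  have AmB: "A = - B"
    proof (rule eq_matI)
    fix i j assume ij: "i < dim_row (- B)" "j < dim_col (- B)"
    have "(A + B) $$ (i,j) = 0\<^sub>m d d $$ (i,j)" using AB by simp
    thus "A $$ (i, j) = (- B) $$ (i, j)" using ij A B by (simp add: eq_neg_iff_add_eq_0)
  qed (use A B in simp_all)
  have AP: "A * P = A" unfolding A_def by (simp add: dims assoc' PP del: assoc_mult_mat)
  have PB: "P * B = B" unfolding B_def by (simp add: dims assoc' PPZ del: assoc_mult_mat)
  have "P * X * H * K * P = P * A * P" unfolding A_def by (simp add: dims assoc' PP del: assoc_mult_mat)
  also have "\<dots> = - (B * P)" unfolding AmB using PB B by (simp add: dims del: assoc_mult_mat)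
  also have "\<dots> = mat_adjoint (P * X' * H' * K * P)"
  proof -
    have c2: "P * X' \<in> carrier_mat d R" by (rule mult_carrier_mat[OF P X'])
    have c3: "P * X' * H' \<in> carrier_mat d d" by (rule mult_carrier_mat[OF c2 H'])
    have c4: "P * X' * H' * K \<in> carrier_mat d d" by (rule mult_carrier_mat[OF c3 K])
    have "mat_adjoint (P * X' * H' * K * P) = P * (- K * (mat_adjoint H' * (mat_adjoint X' * P)))"
      by (simp only: adj_mult[OF c4 P] adj_mult[OF c3 K] adj_mult[OF c2 H'] adj_mult[OF P X'] aP aK)
    thus ?thesis unfolding B_def by (simp add: dims assoc' del: assoc_mult_mat)
  qed
  finally show ?thesis .
qed


theorem lemma4p3:
  fixes n N np :: nat and J :: "complex mat"
    and dq dw :: "real \<Rightarrow> complex mat"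
    and a b :: ereal and xs :: "nat \<Rightarrow> real"
    and Um Up :: "nat \<Rightarrow> complex \<Rightarrow> complex mat"
    and Pm Pp Am Ap :: "complex \<Rightarrow> complex mat"
    and PP :: "complex mat" and rho :: "complex set" and lam :: complex
  assumes J: "J \<in> carrier_mat n n" "invertible_mat J" "skew_hermitian_m J"
    and atoms: "\<And>x. dq x \<in> carrier_mat n n \<and> hermitian_m (dq x)"
               "\<And>x. dw x \<in> carrier_mat n n \<and> nonneg_m (dw x)"
    and pts: "a < b" "N > 0 \<Longrightarrow> a < ereal (xs 1) \<and> ereal (xs N) < b"
             "\<And>k. 1 \<le> k \<Longrightarrow> k < N \<Longrightarrow> xs k < xs (k+1)"
    and real_free: "\<And>x. a < ereal x \<Longrightarrow> ereal x < b \<Longrightarrow> x \<notin> xs ` {1..N}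
                     \<Longrightarrow> LambdaX J dq dw x \<inter> range complex_of_real = {}"
    and U: "\<And>k \<mu>. Um k \<mu> \<in> carrier_mat n n" "\<And>k \<mu>. Up k \<mu> \<in> carrier_mat n n"
    and P: "\<And>\<mu>. orth_proj n (Pm \<mu>)" "\<And>\<mu>. orth_proj n (Pp \<mu>)"
    and A: "\<And>\<mu>. Am \<mu> \<in> carrier_mat np n" "\<And>\<mu>. Ap \<mu> \<in> carrier_mat np n"
    and PP: "orth_proj (n*(N+1)) PP"
    and rho_conj: "\<And>\<mu>. \<mu> \<in> rho \<Longrightarrow> cnj \<mu> \<in> rho"
    and left_inv: "\<And>\<mu>. \<mu> \<in> rho - tLambda J dq dw a b N xs \<Longrightarrow>
        pinv (FF n N J dq dw xs Um Up Pm Pp Am Ap PP \<mu>) * FF n N J dq dw xs Um Up Pm Pp Am Ap PP \<mu>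
          = 1\<^sub>m (n*(N+1))"
    and lam: "lam \<in> rho - tLambda J dq dw a b N xs"
    and Om: "Omega n N J dq dw xs Um Up Pm Pp Am Ap PP lam
               = 0\<^sub>m (dim_row (FF n N J dq dw xs Um Up Pm Pp Am Ap PP lam))
                     (dim_row (FF n N J dq dw xs Um Up Pm Pp Am Ap PP lam))"
  shows "MM n N J dq dw xs Um Up Pm Pp Am Ap PP lam
           = mat_adjoint (MM n N J dq dw xs Um Up Pm Pp Am Ap PP (cnj lam))"
proof -
  define d where "d = n * (N + 1)"
  define R where "R = n*N + n + n + np + n*(N+1)"
  define F where "F = FF n N J dq dw xs Um Up Pm Pp Am Ap PP lam"
  define F' where "F' = FF n N J dq dw xs Um Up Pm Pp Am Ap PP (cnj lam)"
  define H where "H = HH n N J dq dw xs Um Up Pm Pp Am Ap lam"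
  define H' where "H' = HH n N J dq dw xs Um Up Pm Pp Am Ap (cnj lam)"
  define K where "K = calJinv n N J"
  have Pc: "\<And>\<mu>. Pm \<mu> \<in> carrier_mat n n" "\<And>\<mu>. Pp \<mu> \<in> carrier_mat n n"
    using P unfolding orth_proj_def by auto
  have PPc: "PP \<in> carrier_mat d d" and PPP: "PP * PP = PP" and aPP: "mat_adjoint PP = PP"
    using PP unfolding orth_proj_def d_def by auto
  note FHc = FF_carrier[OF U Pc A PPc[unfolded d_def]]
  have Fc: "F \<in> carrier_mat R d" "F' \<in> carrier_mat R d" "H \<in> carrier_mat R d" "H' \<in> carrier_mat R d"
    unfolding F_def F'_def H_def H'_def R_def d_def using FHc by auto
  have Kc: "K \<in> carrier_mat d d" unfolding K_def calJinv_def bdiag_def d_def by simp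
  have skJ: "mat_adjoint J = - J" using J(3) unfolding skew_hermitian_m_def by simp
  have aK: "mat_adjoint K = - K" unfolding K_def by (rule adj_calJinv[OF J(1,2) skJ])
  have lam': "cnj lam \<in> rho - tLambda J dq dw a b N xs"
  proof
    show "cnj lam \<in> rho" using lam rho_conj by auto
    show "cnj lam \<notin> tLambda J dq dw a b N xs"
    proof
      assume "cnj lam \<in> tLambda J dq dw a b N xs"
      then obtain x where x: "a < ereal x \<and> ereal x < b \<and> x \<notin> xs ` {1..N}" and
        mu: "cnj lam \<in> LambdaX J dq dw x" unfolding tLambda_def by auto
      have q: "dq x \<in> carrier_mat n n" "mat_adjoint (dq x) = dq x"
        using atoms(1)[of x] unfolding hermitian_m_def by auto
      have w: "dw x \<in> carrier_mat n n" "mat_adjoint (dw x) = dw x"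
        using atoms(2)[of x] unfolding nonneg_m_def hermitian_m_def by auto
      have "cnj (cnj lam) \<in> LambdaX J dq dw x"
        by (rule LambdaX_conj[where dq=dq and dw=dw and x=x, OF J(1) skJ q w mu])
      hence "lam \<in> tLambda J dq dw a b N xs" using x unfolding tLambda_def by auto
      thus False using lam by auto
    qed
  qed
  have pinvs: "pinv G \<in> carrier_mat d R \<and> pinv G * G = 1\<^sub>m d"
    if G: "G \<in> carrier_mat R d" and li: "pinv G * G = 1\<^sub>m d" for G
  proof -
    define Xt where "Xt = mat (dim_row (pinv G)) R (\<lambda>(i,j). row (pinv G) i $ j)"
    have "dim_row (pinv G) = d" using arg_cong[OF li, of dim_row] by simp
    hence Xt: "Xt \<in> carrier_mat d R" unfolding Xt_def by simp
    have "Xt * G = 1\<^sub>m d" unfolding Xt_def using trunc_mult[of G R "pinv G"] G li by simp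
    from pinv_left[OF G Xt this] show ?thesis .
  qed
  have X: "pinv F \<in> carrier_mat d R \<and> pinv F * F = 1\<^sub>m d"
    using pinvs[OF Fc(1)] left_inv[OF lam] unfolding F_def d_def by simp
  have X': "pinv F' \<in> carrier_mat d R \<and> pinv F' * F' = 1\<^sub>m d"
    using pinvs[OF Fc(2)] left_inv[OF lam'] unfolding F'_def d_def by simp
  have Om': "H * K * PP * mat_adjoint F' + F * PP * K * mat_adjoint H' = 0\<^sub>m R R"
    using Om Fc(1) unfolding Omega_def F_def F'_def H_def H'_def K_def by simp
  have "PP * pinv F * H * K * PP = mat_adjoint (PP * pinv F' * H' * K * PP)"
    by (rule main_alg[OF Fc Kc PPc _ _ _ _ aK aPP PPP Om'], use X X' in auto)
  thus ?thesis unfolding MM_def F_def F'_def H_def H'_def K_def .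
qed

end
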